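(* Let $\varepsilon\in(0,1)$ be irrational and let $b,M$ be integers with $b\ge1$ and $2b\le M$. Then the number of distinct $b$-amicable pairs $(w^{(1)},w^{(2)})$ with $w^{(1)},w^{(2)}\in\mathcal{L}_M(\varepsilon)$ is at most $M-b$.
   Context: For irrational $\varepsilon\in(0,1)$, let $T_\varepsilon:[0,1)\to[0,1)$, $T_\varepsilon(x)=x+1-\varepsilon$ on $[0,\varepsilon)$ and $x-\varepsilon$ on $[\varepsilon,1)$; the coding $u_{\varepsilon,x_0}\in\{0,1\}^{\mathbb{Z}}$ has $u_n=0$ if $T^n_\varepsilon(x_0)\in[0,\varepsilon)$ and $1$ otherwise. $\mathcal{L}_M(\varepsilon)$ is the set of length-$M$ factors of $u_{\varepsilon,x_0}$ (independent of $x_0$). 3iet words: for irrational $\varepsilon\in(0,1)$ and $\max\{\varepsilon,1-\varepsilon\}<\ell<1$, let $T_{\varepsilon,\ell}$ on $[0,\ell)$ be $x\mapsto x+1-\varepsilon$ on $I_A=[0,\ell-1+\varepsilon)$, $x\mapsto x+1-2\varepsilon$ on $I_B=[\ell-1+\varepsilon,\varepsilon)$, $x\mapsto x-\varepsilon$ on $I_C=[\varepsilon,\ell)$; the word $u_{\varepsilon,\ell,x_0}\in\{A,B,C\}^{\mathbb{Z}}$ has $u_n=X$ iff $T^n_{\varepsilon,\ell}(x_0)\in I_X$. A 3iet factor is a finite factor of some such word. Morphisms $\sigma_{01},\sigma_{10}:\{A,B,C\}^*\to\{0,1\}^*$: $\sigma_{01}(A)=0,\sigma_{01}(B)=01,\sigma_{01}(C)=1$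 and $\sigma_{10}(A)=0,\sigma_{10}(B)=10,\sigma_{10}(C)=1$. Two words $w^{(1)},w^{(2)}\in\{0,1\}^*$ form a $b$-amicable pair if there is a 3iet factor $w$ with exactly $b$ letters $B$ such that $w^{(1)}=\sigma_{01}(w)$ and $w^{(2)}=\sigma_{10}(w)$. *)

theory Defs
  imports Complex_Main
begin

definition zpow_on :: "'a set \<Rightarrow> ('a \<Rightarrow> 'a) \<Rightarrow> int \<Rightarrow> 'a \<Rightarrow> 'a" where
  "zpow_on S f n x = (if 0 \<le> n then (f ^^ nat n) x else (the_inv_into S f ^^ nat (- n)) x)"

definition rot :: "real \<Rightarrow> real \<Rightarrow> real" where
  "rot eps x = (if x < eps then x + 1 - eps else x - eps)"

definition rot_word :: "real \<Rightarrow> real \<Rightarrow> int \<Rightarrow> nat" where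
  "rot_word eps x0 n = (if zpow_on {0..<1} (rot eps) n x0 < eps then 0 else 1)"

definition LM :: "real \<Rightarrow> real \<Rightarrow> nat \<Rightarrow> nat list set" where
  "LM eps x0 M = {map (\<lambda>i. rot_word eps x0 (k + int i)) [0..<M] | k. True}"

datatype abc = A | B | C

definition iet3 :: "real \<Rightarrow> real \<Rightarrow> real \<Rightarrow> real" where
  "iet3 eps l x = (if x < l - 1 + eps then x + 1 - eps
                   else if x < eps then x + 1 - 2 * eps else x - eps)"

definition iet3_letter :: "real \<Rightarrow> real \<Rightarrow> real \<Rightarrow> abc" where
  "iet3_letter eps l y = (if y < l - 1 + eps then A else if y < eps then B else C)"

definition iet3_word :: "real \<Rightarrow> real \<Rightarrow> real \<Rightarrow> int \<Rightarrow> abc" where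
  "iet3_word eps l x0 n = iet3_letter eps l (zpow_on {0..<l} (iet3 eps l) n x0)"

definition iet3_factor :: "abc list \<Rightarrow> bool" where
  "iet3_factor w \<longleftrightarrow> (\<exists>eps l x0 k. eps \<notin> \<rat> \<and> 0 < eps \<and> eps < 1 \<and>
       max eps (1 - eps) < l \<and> l < 1 \<and> 0 \<le> x0 \<and> x0 < l \<and>
       w = map (\<lambda>i. iet3_word eps l x0 (k + int i)) [0..<length w])"

fun s01 :: "abc \<Rightarrow> nat list" where
  "s01 A = [0]" | "s01 B = [0, 1]" | "s01 C = [1]"

fun s10 :: "abc \<Rightarrow> nat list" where
  "s10 A = [0]" | "s10 B = [1, 0]" | "s10 C = [1]"

definition sigma01 :: "abc list \<Rightarrow> nat list" where
  "sigma01 w = concat (map s01 w)"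

definition sigma10 :: "abc list \<Rightarrow> nat list" where
  "sigma10 w = concat (map s10 w)"

definition amicable :: "nat \<Rightarrow> nat list \<Rightarrow> nat list \<Rightarrow> bool" where
  "amicable b w1 w2 \<longleftrightarrow> (\<exists>w. iet3_factor w \<and> count_list w B = b \<and>
       w1 = sigma01 w \<and> w2 = sigma10 w)"

end

theory Submission
  imports Defs
begin


lemma frac_cong: "x - z \<in> \<int> \<Longrightarrow> frac x = frac z"
proof -
  assume h: "x - z \<in> \<int>"
  have "x - frac z = (x - z) + of_int \<lfloor>z\<rfloor>" by (simp add: frac_def)
  also have "\<dots> \<in> \<int>" using h by (intro Ints_add) auto
  finally show ?thesis by (simp add: frac_unique_iff frac_lt_1)
qed

lemma frac_a: "0 \<le> x \<Longrightarrow> x < 1 \<Longrightarrow> frac x = x" by (simp add: frac_eq)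
lemma frac_b: "1 \<le> x \<Longrightarrow> x < 2 \<Longrightarrow> frac x = x - 1"
  using frac_1_eq[of "x - 1"] by (simp add: frac_eq)
lemma frac_c: "-1 \<le> x \<Longrightarrow> x < 0 \<Longrightarrow> frac x = x + 1"
  using frac_1_eq[of "x"] by (simp add: frac_eq)

lemma parity_u:
  fixes u D L :: real
  assumes "0 \<le> u" "u < 1" "0 \<le> D" "D < 1" "0 < L" "L < 1"
  shows "(frac (u + D) < L) = ((u < L) \<noteq> ((0 < frac (-u) \<and> frac (-u) \<le> D) \<noteq> (0 < frac (L - u) \<and> frac (L - u) \<le> D)))"
proof -
  have e1: "frac (u + D) = (if u + D < 1 then u + D else u + D - 1)"
    using assms frac_a[of "u+D"] frac_b[of "u+D"] by auto
  have e2: "frac (-u) = (if u = 0 then 0 else 1 - u)"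
    using assms frac_a[of 0] frac_c[of "-u"] by auto
  have e3: "frac (L - u) = (if u \<le> L then L - u else L - u + 1)"
    using assms frac_a[of "L-u"] frac_c[of "L - u"] by auto
  show ?thesis unfolding e1 e2 e3 using assms by auto
qed

lemma parity:
  fixes x D L :: real
  assumes "0 \<le> D" "D < 1" "0 < L" "L < 1"
  shows "(frac (x + D) < L) = ((frac x < L) \<noteq> ((0 < frac (-x) \<and> frac (-x) \<le> D) \<noteq> (0 < frac (L - x) \<and> frac (L - x) \<le> D)))"
proof -
  have "frac (x + D) = frac (frac x + D)" by (rule frac_cong) (simp add: frac_def)
  moreover have "frac (-x) = frac (- frac x)" by (rule frac_cong) (simp add: frac_def)
  moreover have "frac (L - x) = frac (L - frac x)" by (rule frac_cong) (simp add: frac_def)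
  ultimately show ?thesis using parity_u[of "frac x" D L] assms frac_lt_1[of x] by simp
qed

lemma rot_frac: "0 \<le> x \<Longrightarrow> x < 1 \<Longrightarrow> 0 < eps \<Longrightarrow> eps < 1 \<Longrightarrow> rot eps x = frac (x - eps)"
  unfolding rot_def using frac_a[of "x - eps"] frac_c[of "x - eps"] by auto

lemma zpow_frac:
  fixes eps x0 :: real
  assumes "0 < eps" "eps < 1" "0 \<le> x0" "x0 < 1"
  shows "zpow_on {0..<1} (rot eps) n x0 = frac (x0 - of_int n * eps)"
proof -
  have pos: "(rot eps ^^ m) x0 = frac (x0 - real m * eps)" for m
  proof (induction m)
    case 0 then show ?case using assms by (simp add: frac_a)
  next
    case (Suc m)
    have "(rot eps ^^ Suc m) x0 = rot eps (frac (x0 - real m * eps))" using Suc by simp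
    also have "\<dots> = frac (frac (x0 - real m * eps) - eps)"
      using assms by (intro rot_frac) (auto simp: frac_lt_1)
    also have "\<dots> = frac (x0 - real (Suc m) * eps)"
      by (rule frac_cong) (simp add: frac_def algebra_simps)
    finally show ?case .
  qed
  have inj: "inj_on (rot eps) {0..<1}"
  proof
    fix a c assume a: "a \<in> {0..<1::real}" and c: "c \<in> {0..<1::real}" and e: "rot eps a = rot eps c"
    then show "a = c" unfolding rot_def using assms by (auto split: if_splits)
  qed
  have inv: "the_inv_into {0..<1} (rot eps) z = frac (z + eps)" if "0 \<le> z" "z < 1" for z
  proof (rule the_inv_into_f_eq[OF inj])
    show "rot eps (frac (z + eps)) = z"
      proof -
      have "frac (frac (z + eps) - eps) = frac z" by (rule frac_cong) (simp add: frac_def)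
      then show ?thesis using that assms by (subst rot_frac) (auto simp: frac_lt_1 frac_a)
    qed
    show "frac (z + eps) \<in> {0..<1}" by (simp add: frac_lt_1)
  qed
  have neg: "(the_inv_into {0..<1} (rot eps) ^^ m) x0 = frac (x0 + real m * eps)" for m
  proof (induction m)
    case 0 then show ?case using assms by (simp add: frac_a)
  next
    case (Suc m)
    have "(the_inv_into {0..<1} (rot eps) ^^ Suc m) x0 = the_inv_into {0..<1} (rot eps) (frac (x0 + real m * eps))" using Suc by simp
    also have "\<dots> = frac (frac (x0 + real m * eps) + eps)"
      by (intro inv) (auto simp: frac_lt_1)
    also have "\<dots> = frac (x0 + real (Suc m) * eps)"
      by (rule frac_cong) (simp add: frac_def algebra_simps)
    finally show ?case .
  qed
  show ?thesis
  proof (cases "0 \<le> n")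
    case True then show ?thesis using pos[of "nat n"] by (simp add: zpow_on_def)
  next
    case False then show ?thesis using neg[of "nat (-n)"] by (simp add: zpow_on_def)
  qed
qed



definition Fw :: "real \<Rightarrow> nat \<Rightarrow> real \<Rightarrow> nat list" where
  "Fw eps M y = map (\<lambda>i. if frac (y - real i * eps) < eps then 0 else 1) [0..<M]"

definition cr :: "real \<Rightarrow> real \<Rightarrow> real \<Rightarrow> nat \<Rightarrow> bool" where
  "cr eps y D j = (0 < frac (real j * eps - y) \<and> frac (real j * eps - y) \<le> D)"

lemma letter_diff:
  assumes "0 < eps" "eps < 1"
  shows "((frac (y' - real k * eps) < eps) \<noteq> (frac (y - real k * eps) < eps))
     = (cr eps y (frac (y' - y)) k \<noteq> cr eps y (frac (y' - y)) (Suc k))"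
proof -
  have p: "(frac ((y - real k * eps) + frac (y' - y)) < eps) = ((frac (y - real k * eps) < eps) \<noteq> ((0 < frac (-(y - real k * eps)) \<and> frac (-(y - real k * eps)) \<le> frac (y' - y)) \<noteq> (0 < frac (eps - (y - real k * eps)) \<and> frac (eps - (y - real k * eps)) \<le> frac (y' - y))))"
    using assms by (intro parity) (auto simp: frac_lt_1)
  have 1: "frac ((y - real k * eps) + frac (y' - y)) = frac (y' - real k * eps)"
    by (rule frac_cong) (simp add: frac_def)
  have 2: "-(y - real k * eps) = real k * eps - y" by simp
  have 3: "eps - (y - real k * eps) = real (Suc k) * eps - y" by (simp add: algebra_simps)
  show ?thesis using p unfolding 1 2 3 cr_def by auto
qed

lemma LM_sub:
  assumes "0 < eps" "eps < 1" "0 \<le> x0" "x0 < 1" "w \<in> LM eps x0 M"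
  shows "\<exists>y. 0 \<le> y \<and> y < 1 \<and> w = Fw eps M y"
proof -
  obtain k where k: "w = map (\<lambda>i. rot_word eps x0 (k + int i)) [0..<M]"
    using assms(5) unfolding LM_def by auto
  define y where "y = frac (x0 - of_int k * eps)"
  have "rot_word eps x0 (k + int i) = (if frac (y - real i * eps) < eps then 0 else 1)" for i
  proof -
    have "frac (x0 - of_int (k + int i) * eps) = frac (y - real i * eps)"
      unfolding y_def by (rule frac_cong) (simp add: frac_def algebra_simps)
    then show ?thesis unfolding rot_word_def using zpow_frac[OF assms(1-4)] by simp
  qed
  then have "w = Fw eps M y" unfolding k Fw_def by simp
  moreover have "0 \<le> y" "y < 1" unfolding y_def by (auto simp: frac_lt_1)
  ultimately show ?thesis by blast
qed

lemma crossing: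
  assumes "0 \<le> y" "y \<le> y'" "y' < 1"
  shows "cr eps y (frac (y' - y)) j = (y < frac (real j * eps) \<and> frac (real j * eps) \<le> y')"
proof -
  define q where "q = frac (real j * eps)"
  have q: "0 \<le> q" "q < 1" unfolding q_def by (auto simp: frac_lt_1)
  have "frac (real j * eps - y) = frac (q - y)" unfolding q_def by (rule frac_cong) (simp add: frac_def)
  moreover have "frac (q - y) = (if y \<le> q then q - y else q - y + 1)"
    using q assms frac_a[of "q - y"] frac_c[of "q - y"] by auto
  moreover have "frac (y' - y) = y' - y" using assms by (simp add: frac_a)
  ultimately show ?thesis unfolding cr_def q_def[symmetric] using q assms by auto
qed

fun hh :: "abc \<Rightarrow> (nat \<times> nat) list" where
  "hh A = [(0,0)]" | "hh B = [(0,1),(1,0)]" | "hh C = [(1,1)]"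

lemma zip_sig: "zip (sigma01 w) (sigma10 w) = concat (map hh w)"
  by (induction w) (auto simp: sigma01_def sigma10_def elim: hh.cases split: abc.splits
     intro: abc.exhaust, (case_tac a; simp)+)



lemma len_sig: "length (sigma01 w) = length (concat (map hh w))" "length (sigma10 w) = length (concat (map hh w))"
  by (induction w) (auto simp: sigma01_def sigma10_def, (case_tac a; simp)+)

lemma Z_F1: "k < length (concat (map hh w)) \<Longrightarrow> concat (map hh w) ! k = (0,1) \<Longrightarrow>
   Suc k < length (concat (map hh w)) \<and> concat (map hh w) ! Suc k = (1,0)"
proof (induction w arbitrary: k)
  case Nil then show ?case by simp
next
  case (Cons a w)
  show ?case
  proof (cases a)
    case A then show ?thesis using Cons by (cases k) auto
  next
    case C then show ?thesis using Cons by (cases k) auto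
  next
    case B then show ?thesis using Cons
      by (cases k; cases "k - 1") (auto simp: nth_Cons split: nat.splits)
  qed
qed

lemma Z_F0: "0 < length (concat (map hh w)) \<Longrightarrow> concat (map hh w) ! 0 \<noteq> (1,0)"
proof (induction w)
  case Nil then show ?case by simp
next
  case (Cons a w) then show ?case by (cases a) auto
qed

lemma Z_F2: "Suc k < length (concat (map hh w)) \<Longrightarrow> concat (map hh w) ! Suc k = (1,0) \<Longrightarrow>
   concat (map hh w) ! k = (0,1)"
proof (induction w arbitrary: k)
  case Nil then show ?case by simp
next
  case (Cons a w)
  show ?case
  proof (cases a)
    case A then show ?thesis using Cons Z_F0[of w] by (cases k) (auto simp: nth_Cons split: nat.splits)
  next
    case C then show ?thesis using Cons Z_F0[of w] by (cases k) (auto simp: nth_Cons split: nat.splits)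
  next
    case B then show ?thesis using Cons Z_F0[of w]
      by (cases k; cases "k - 1") (auto simp: nth_Cons split: nat.splits)
  qed
qed

lemma Z_count: "count_list (concat (map hh w)) (0,1) = count_list w B"
proof (induction w)
  case Nil then show ?case by simp
next
  case (Cons a w) then show ?case by (cases a) auto
qed

lemma card_count: "card {k. k < length xs \<and> xs ! k = x} = count_list xs x"
  by (simp add: count_list_eq_length_filter length_filter_conv_card eq_commute)



lemma dir_real:
  fixes eps t t' :: real
  assumes "0 < eps" "eps < 1" "0 \<le> t" "t < 1" "0 \<le> t'" "t' < 1"
    "frac (t + eps) < eps" "\<not> t < eps" "\<not> frac (t' + eps) < eps" "t' < eps"
  shows "0 < frac (-t) \<and> frac (-t) \<le> frac (t' - t)"
proof -
  have "t + eps \<ge> 1"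
  proof (rule ccontr)
    assume "\<not> ?thesis" then have "frac (t + eps) = t + eps" using assms by (simp add: frac_a)
    then show False using assms by linarith
  qed
  then have "frac (t + eps) = t + eps - 1" using assms by (simp add: frac_b)
  have "t' + eps < 1"
  proof (rule ccontr)
    assume "\<not> ?thesis" then have "frac (t' + eps) = t' + eps - 1" using assms by (simp add: frac_b)
    then show False using assms by linarith
  qed
  have "frac (-t) = 1 - t" using assms frac_c[of "-t"] by simp
  moreover have "frac (t' - t) = t' - t + 1" using assms frac_c[of "t' - t"] \<open>t + eps \<ge> 1\<close> by simp
  ultimately show ?thesis using assms \<open>t + eps \<ge> 1\<close> \<open>t' + eps < 1\<close> by auto
qed

lemma core:
  fixes eps y y' :: real and M b :: nat and w :: "abc list"
  assumes eps: "0 < eps" "eps < 1"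
    and y: "0 \<le> y" "y < 1" "0 \<le> y'" "y' < 1"
    and u: "Fw eps M y = sigma01 w" and v: "Fw eps M y' = sigma10 w"
    and cnt: "count_list w B = b" and b1: "1 \<le> b"
  shows "y < y' \<and> {j. j \<le> M \<and> y < frac (real j * eps) \<and> frac (real j * eps) \<le> y'}
            = Suc ` {k. k < M \<and> concat (map hh w) ! k = (0,1)}
         \<and> \<not> (y < frac (real M * eps) \<and> frac (real M * eps) \<le> y')"
proof -
  define Z where "Z = concat (map hh w)"
  have lenZ: "length Z = M" using len_sig[of w] u unfolding Z_def by (metis Fw_def length_map length_upt minus_nat.diff_0)
  have Zk: "Z ! k = (Fw eps M y ! k, Fw eps M y' ! k)" if "k < M" for k
  proof -
    have "Z = zip (Fw eps M y) (Fw eps M y')" unfolding Z_def u v zip_sig ..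
    then show ?thesis using that by (simp add: Fw_def)
  qed
  have lt: "Fw eps M z ! k = (if frac (z - real k * eps) < eps then 0 else 1)" if "k < M" for z k
    using that by (simp add: Fw_def)
  define D where "D = frac (y' - y)"
  define c where "c j = cr eps y D j" for j
  define ctr where "ctr j = (0 < j \<and> Z ! (j - 1) = (0,1))" for j
  have a: "(fst (Z ! k) \<noteq> snd (Z ! k)) = (c k \<noteq> c (Suc k))" if "k < M" for k
    using letter_diff[OF eps, of y' k y] unfolding Zk[OF that] lt[OF that] c_def D_def
    by (auto split: if_splits)
  have F1: "Suc k < M \<and> Z ! Suc k = (1,0)" if "k < M" "Z ! k = (0,1)" for k
    using Z_F1[of k w] that lenZ unfolding Z_def by auto
  have F2: "Z ! k = (0,1)" if "Suc k < M" "Z ! Suc k = (1,0)" for k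
    using Z_F2[of k w] that lenZ unfolding Z_def by auto
  have F0: "Z ! 0 \<noteq> (1,0)" if "0 < M" using Z_F0[of w] that lenZ unfolding Z_def by auto
  have vals: "fst (Z ! k) \<in> {0,1} \<and> snd (Z ! k) \<in> {0,1}" if "k < M" for k
    using Zk[OF that] lt[OF that] by auto
  have cind: "c j = (c 0 \<noteq> ctr j)" if "j \<le> M" for j
    using that
  proof (induction j)
    case 0 then show ?case by (simp add: ctr_def)
  next
    case (Suc j)
    have jM: "j < M" using Suc by simp
    have IH: "c j = (c 0 \<noteq> ctr j)" using Suc by simp
    have step: "c (Suc j) = (c j \<noteq> (fst (Z ! j) \<noteq> snd (Z ! j)))" using a[OF jM] by auto
    obtain p q where pq: "Z ! j = (p, q)" by (cases "Z ! j")
    have pq01: "p \<in> {0,1}" "q \<in> {0,1}" using vals[OF jM] pq by auto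
    show ?case
    proof (cases "Z ! j = (0,1)")
      case True
      have "\<not> ctr j"
      proof
        assume "ctr j"
        then have "0 < j" "Z ! (j - 1) = (0,1)" unfolding ctr_def by auto
        then have "Z ! j = (1,0)" using F1[of "j - 1"] jM by auto
        then show False using True by simp
      qed
      then show ?thesis using step IH True by (simp add: ctr_def)
    next
      case f1: False
      show ?thesis
      proof (cases "Z ! j = (1,0)")
        case True
        have j0: "0 < j" using True F0 jM by (cases j) auto
        have "ctr j" using F2[of "j - 1"] j0 jM True unfolding ctr_def by auto
        then show ?thesis using step IH True by (simp add: ctr_def)
      next
        case False
        have eq: "fst (Z ! j) = snd (Z ! j)" using pq pq01 f1 False by auto
        have "\<not> ctr j"
        proof
          assume "ctr j"
          then have "0 < j" "Z ! (j - 1) = (0,1)" unfolding ctr_def by auto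
          then have "Z ! j = (1,0)" using F1[of "j - 1"] jM by auto
          then show False using False by simp
        qed
        then show ?thesis using step IH eq f1 by (simp add: ctr_def)
      qed
    qed
  qed
  have dctr: "c j" if "ctr j" "j \<le> M" for j
  proof -
    have j0: "0 < j" "Z ! (j - 1) = (0,1)" using that unfolding ctr_def by auto
    obtain k where kk: "j = Suc k" using j0(1) gr0_implies_Suc by blast
    have k: "j = Suc k" "Z ! k = (0,1)" using kk j0 by auto
    have kM: "k < M" using k that by simp
    have f: "Suc k < M" "Z ! Suc k = (1,0)" using F1[OF kM k(2)] by auto
    define t where "t = frac (y - real j * eps)"
    define t' where "t' = frac (y' - real j * eps)"
    have e1: "frac (y - real k * eps) = frac (t + eps)" unfolding t_def k
      by (rule frac_cong) (simp add: frac_def algebra_simps)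
    have e2: "frac (y' - real k * eps) = frac (t' + eps)" unfolding t'_def k
      by (rule frac_cong) (simp add: frac_def algebra_simps)
    have p1: "Fw eps M y ! k = 0" "Fw eps M y' ! k = 1" using Zk[OF kM] k(2) by simp_all
    have p2: "Fw eps M y ! Suc k = 1" "Fw eps M y' ! Suc k = 0" using Zk[OF f(1)] f(2) by simp_all
    have h1: "frac (t + eps) < eps" "\<not> frac (t' + eps) < eps"
      using p1 unfolding lt[OF kM] e1 e2 by (simp_all split: if_splits)
    have h2: "\<not> t < eps" "t' < eps"
      using p2 unfolding lt[OF f(1)] t_def t'_def k by (simp_all split: if_splits)
    have r: "0 < frac (-t) \<and> frac (-t) \<le> frac (t' - t)"
      using dir_real[OF eps _ _ _ _ h1(1) h2(1) h1(2) h2(2)] unfolding t_def t'_def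
      by (auto simp: frac_lt_1)
    have "frac (-t) = frac (real j * eps - y)" unfolding t_def
      by (rule frac_cong) (simp add: frac_def)
    moreover have "frac (t' - t) = D" unfolding t_def t'_def D_def
      by (rule frac_cong) (simp add: frac_def)
    ultimately show ?thesis using r unfolding c_def cr_def by simp
  qed
  have "(0,1) \<in> set Z" using cnt b1 Z_count[of w] unfolding Z_def[symmetric]
    by (metis count_list_0_iff not_one_le_zero)
  then obtain k0 where k0: "k0 < M" "Z ! k0 = (0,1)" using lenZ by (auto simp: in_set_conv_nth)
  have "ctr (Suc k0)" using k0 by (simp add: ctr_def)
  then have "c (Suc k0)" using dctr k0 by simp
  then have c0: "\<not> c 0" using cind[of "Suc k0"] k0 \<open>ctr (Suc k0)\<close> by simp
  have cc: "c j = ctr j" if "j \<le> M" for j using cind[OF that] c0 by simp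
  have Dpos: "0 < D" using \<open>c (Suc k0)\<close> unfolding c_def cr_def by linarith
  have yy: "y < y'"
  proof (cases "y = 0")
    case True then show ?thesis using Dpos y unfolding D_def by (simp add: frac_a)
  next
    case False
    have fy: "frac (-y) = 1 - y" using y False frac_c[of "-y"] by simp
    have "\<not> (1 - y \<le> D)" using c0 fy y False unfolding c_def cr_def by simp
    show ?thesis
    proof (rule ccontr)
      assume "\<not> y < y'"
      then have "D = y' - y + 1 \<or> D = 0" unfolding D_def using y frac_c[of "y' - y"]
        by (cases "y' = y") auto
      then show False using \<open>\<not> (1 - y \<le> D)\<close> Dpos y by auto
    qed
  qed
  have ccr: "c j = (y < frac (real j * eps) \<and> frac (real j * eps) \<le> y')" for j
    unfolding c_def D_def using crossing[of y y' eps j] y yy by simp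
  have S: "{j. j \<le> M \<and> y < frac (real j * eps) \<and> frac (real j * eps) \<le> y'}
            = Suc ` {k. k < M \<and> Z ! k = (0,1)}"
  proof (intro set_eqI iffI)
    fix j assume "j \<in> {j. j \<le> M \<and> y < frac (real j * eps) \<and> frac (real j * eps) \<le> y'}"
    then have "j \<le> M" "ctr j" using cc ccr by auto
    then show "j \<in> Suc ` {k. k < M \<and> Z ! k = (0,1)}" unfolding ctr_def
      by (cases j) auto
  next
    fix j assume "j \<in> Suc ` {k. k < M \<and> Z ! k = (0,1)}"
    then obtain k where "j = Suc k" "k < M" "Z ! k = (0,1)" by auto
    then have "j \<le> M" "ctr j" using F1 by (auto simp: ctr_def)
    then show "j \<in> {j. j \<le> M \<and> y < frac (real j * eps) \<and> frac (real j * eps) \<le> y'}"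
      using cc ccr by auto
  qed
  have "\<not> ctr M"
  proof
    assume "ctr M"
    then have "0 < M" "Z ! (M - 1) = (0,1)" unfolding ctr_def by auto
    then show False using F1[of "M - 1"] by auto
  qed
  then have "\<not> c M" using cc by simp
  then show ?thesis using yy S ccr unfolding Z_def by simp
qed



definition NN :: "real \<Rightarrow> nat \<Rightarrow> real \<Rightarrow> nat" where
  "NN eps M y = card {j. j \<le> M \<and> frac (real j * eps) \<le> y}"

lemma NN_fin: "finite {j. j \<le> (M::nat) \<and> P j}"
  by (rule finite_subset[of _ "{..M}"]) (auto simp: finite_atMost)

lemma sameN1:
  assumes eps: "0 < eps" "eps < 1" and y: "0 \<le> y1" "y1 \<le> y2" "y2 < 1"
    and e: "NN eps M y1 = NN eps M y2"
  shows "Fw eps M y1 = Fw eps M y2"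
proof -
  let ?S1 = "{j. j \<le> M \<and> frac (real j * eps) \<le> y1}"
  let ?S2 = "{j. j \<le> M \<and> frac (real j * eps) \<le> y2}"
  have sub: "?S1 \<subseteq> ?S2" using y by auto
  have "?S1 = ?S2" using card_subset_eq[OF NN_fin sub] e unfolding NN_def by simp
  then have nc: "\<not> (y1 < frac (real j * eps) \<and> frac (real j * eps) \<le> y2)" if "j \<le> M" for j
  proof -
    have "(j \<in> ?S1) = (j \<in> ?S2)" using \<open>?S1 = ?S2\<close> by simp
    then show ?thesis using that by auto
  qed
  show ?thesis
  proof (rule nth_equalityI)
    show "length (Fw eps M y1) = length (Fw eps M y2)" by (simp add: Fw_def)
    fix k assume "k < length (Fw eps M y1)"
    then have k: "k < M" by (simp add: Fw_def)
    have "(frac (y2 - real k * eps) < eps) = (frac (y1 - real k * eps) < eps)"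
    proof -
      have "\<not> cr eps y1 (frac (y2 - y1)) k" using crossing[of y1 y2 eps k] nc[of k] k y by simp
      moreover have "\<not> cr eps y1 (frac (y2 - y1)) (Suc k)"
        using crossing[of y1 y2 eps "Suc k"] nc[of "Suc k"] k y by simp
      ultimately show ?thesis using letter_diff[OF eps, of y2 k y1] by blast
    qed
    then show "Fw eps M y1 ! k = Fw eps M y2 ! k" using k by (simp add: Fw_def)
  qed
qed

lemma sameN:
  assumes eps: "0 < eps" "eps < 1" and y: "0 \<le> y1" "y1 < 1" "0 \<le> y2" "y2 < 1"
    and e: "NN eps M y1 = NN eps M y2"
  shows "Fw eps M y1 = Fw eps M y2"
proof (cases "y1 \<le> y2")
  case True show ?thesis by (rule sameN1[OF eps y(1) True y(4) e])
next
  case False then have "y2 \<le> y1" by simp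
  from sameN1[OF eps y(3) this y(2) e[symmetric]] show ?thesis by simp
qed

definition GG :: "real \<Rightarrow> nat \<Rightarrow> nat \<Rightarrow> nat list" where
  "GG eps M n = Fw eps M (SOME z. 0 \<le> z \<and> z < 1 \<and> NN eps M z = n)"

lemma GG_NN:
  assumes eps: "0 < eps" "eps < 1" and y: "0 \<le> y" "y < 1"
  shows "GG eps M (NN eps M y) = Fw eps M y"
proof -
  have ex: "\<exists>z. 0 \<le> z \<and> z < 1 \<and> NN eps M z = NN eps M y" using y by blast
  define z where "z = (SOME z. 0 \<le> z \<and> z < 1 \<and> NN eps M z = NN eps M y)"
  from someI_ex[OF ex] have z: "0 \<le> z" "z < 1" "NN eps M z = NN eps M y"
    unfolding z_def by blast+
  show ?thesis unfolding GG_def z_def[symmetric] by (rule sameN[OF eps z(1,2) y z(3)])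
qed

lemma card_S:
  fixes r b M :: nat
  assumes "2 \<le> r" "r \<le> M + 1" "1 \<le> b" "2 * b \<le> M"
  shows "card {n. 1 \<le> n \<and> n + b \<le> M + 1 \<and> \<not> (n < r \<and> r \<le> n + b)} \<le> M - b"
proof -
  define x where "x = max 1 (r - b)"
  have sub: "{n. 1 \<le> n \<and> n + b \<le> M + 1 \<and> \<not> (n < r \<and> r \<le> n + b)} \<subseteq> {1..M+1-b} - {x}"
  proof
    fix n assume "n \<in> {n. 1 \<le> n \<and> n + b \<le> M + 1 \<and> \<not> (n < r \<and> r \<le> n + b)}"
    then have n: "1 \<le> n" "n + b \<le> M + 1" "\<not> (n < r \<and> r \<le> n + b)" by auto
    have "n \<noteq> x"
    proof (cases "b < r")
      case True then have "x = r - b" unfolding x_def by simp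
      then show ?thesis using n True assms by linarith
    next
      case False then have "x = 1" unfolding x_def by simp
      then show ?thesis using n False assms by linarith
    qed
    then show "n \<in> {1..M+1-b} - {x}" using n by auto
  qed
  have xin: "x \<in> {1..M+1-b}" using assms unfolding x_def by (auto simp: max_def)
  have "card ({1..M+1-b} - {x}) = M - b" using xin assms by simp
  then show ?thesis using card_mono[OF _ sub] by simp
qed



theorem mainTheorem6:
  fixes eps x0 :: real and b M :: nat
  assumes "eps \<notin> \<rat>" "0 < eps" "eps < 1" "0 \<le> x0" "x0 < 1"
    and "1 \<le> b" "2 * b \<le> M"
  shows "finite {(w1, w2). amicable b w1 w2 \<and> w1 \<in> LM eps x0 M \<and> w2 \<in> LM eps x0 M}
    \<and> card {(w1, w2). amicable b w1 w2 \<and> w1 \<in> LM eps x0 M \<and> w2 \<in> LM eps x0 M} \<le> M - b"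
proof -
  note eps = assms(2,3)
  define P where "P = {(w1, w2). amicable b w1 w2 \<and> w1 \<in> LM eps x0 M \<and> w2 \<in> LM eps x0 M}"
  define r where "r = NN eps M (frac (real M * eps))"
  define S where "S = {n. 1 \<le> n \<and> n + b \<le> M + 1 \<and> \<not> (n < r \<and> r \<le> n + b)}"
  have NNle: "NN eps M z \<le> M + 1" for z
  proof -
    have "NN eps M z \<le> card {..M}" unfolding NN_def by (rule card_mono) auto
    then show ?thesis by simp
  qed
  have NN0: "1 \<le> NN eps M z" if "0 \<le> z" for z
  proof -
    have "0 \<in> {j. j \<le> M \<and> frac (real j * eps) \<le> z}" using that by simp
    then have "{j. j \<le> M \<and> frac (real j * eps) \<le> z} \<noteq> {}" by blast
    then show ?thesis unfolding NN_def using NN_fin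
      by (metis One_nat_def Suc_leI card_gt_0_iff)
  qed
  have r2: "2 \<le> r"
  proof -
    have M0: "M \<noteq> 0" using assms by simp
    have "{0, M} \<subseteq> {j. j \<le> M \<and> frac (real j * eps) \<le> frac (real M * eps)}" by auto
    from card_mono[OF NN_fin this] M0 show ?thesis unfolding r_def NN_def by simp
  qed
  have sub: "P \<subseteq> (\<lambda>n. (GG eps M n, GG eps M (n + b))) ` S"
  proof
    fix p assume "p \<in> P"
    then obtain w1 w2 where p: "p = (w1, w2)" "amicable b w1 w2" "w1 \<in> LM eps x0 M" "w2 \<in> LM eps x0 M"
      unfolding P_def by auto
    obtain y where y: "0 \<le> y" "y < 1" "w1 = Fw eps M y" using LM_sub[OF eps assms(4,5) p(3)] by blast
    obtain y' where y': "0 \<le> y'" "y' < 1" "w2 = Fw eps M y'" using LM_sub[OF eps assms(4,5) p(4)] by blast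
    obtain w where w: "count_list w B = b" "w1 = sigma01 w" "w2 = sigma10 w"
      using p(2) unfolding amicable_def by blast
    define Z where "Z = concat (map hh w)"
    define K where "K = {k. k < M \<and> Z ! k = (0,1)}"
    have c: "y < y' \<and> {j. j \<le> M \<and> y < frac (real j * eps) \<and> frac (real j * eps) \<le> y'} = Suc ` K
         \<and> \<not> (y < frac (real M * eps) \<and> frac (real M * eps) \<le> y')"
      using core[OF eps y(1,2) y'(1,2), of M w b] y(3) y'(3) w assms(6) unfolding K_def Z_def by simp
    have lenZ: "length Z = M" using len_sig[of w] y(3) w(2) unfolding Z_def by (simp add: Fw_def)
    have cardK: "card K = b" unfolding K_def using card_count[of Z "(0,1)"] lenZ Z_count[of w] w(1)
      unfolding Z_def by simp
    let ?S1 = "{j. j \<le> M \<and> frac (real j * eps) \<le> y}"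
    let ?X = "{j. j \<le> M \<and> y < frac (real j * eps) \<and> frac (real j * eps) \<le> y'}"
    have un: "{j. j \<le> M \<and> frac (real j * eps) \<le> y'} = ?S1 \<union> ?X" using c by auto
    have "card ?X = b" using c cardK by (simp add: card_image)
    then have Ny': "NN eps M y' = NN eps M y + b" unfolding NN_def un
      by (subst card_Un_disjoint) (auto intro: NN_fin)
    have nr: "\<not> (NN eps M y < r \<and> r \<le> NN eps M y')"
    proof (cases "frac (real M * eps) \<le> y")
      case True
      have "r \<le> NN eps M y" unfolding r_def NN_def by (rule card_mono[OF NN_fin]) (use True in auto)
      then show ?thesis by simp
    next
      case False
      then have gt: "y' < frac (real M * eps)" using c by auto
      have "{j. j \<le> M \<and> frac (real j * eps) \<le> y'} \<subset> {j. j \<le> M \<and> frac (real j * eps) \<le> frac (real M * eps)}"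
      proof -
        have "M \<in> {j. j \<le> M \<and> frac (real j * eps) \<le> frac (real M * eps)}" by simp
        moreover have "M \<notin> {j. j \<le> M \<and> frac (real j * eps) \<le> y'}" using gt by simp
        ultimately have ne: "{j. j \<le> M \<and> frac (real j * eps) \<le> y'} \<noteq> {j. j \<le> M \<and> frac (real j * eps) \<le> frac (real M * eps)}"
          by blast
        have "{j. j \<le> M \<and> frac (real j * eps) \<le> y'} \<subseteq> {j. j \<le> M \<and> frac (real j * eps) \<le> frac (real M * eps)}"
          using gt by auto
        then show ?thesis using ne by blast
      qed
      then have "NN eps M y' < r" unfolding r_def NN_def by (rule psubset_card_mono[OF NN_fin])
      then show ?thesis by simp
    qed
    have "NN eps M y \<in> S" unfolding S_def using NN0[OF y(1)] NNle[of y'] Ny' nr by auto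
    moreover have "p = (GG eps M (NN eps M y), GG eps M (NN eps M y + b))"
      using p(1) y y' GG_NN[OF eps y(1,2), of M] GG_NN[OF eps y'(1,2), of M] Ny'[symmetric] by simp
    ultimately show "p \<in> (\<lambda>n. (GG eps M n, GG eps M (n + b))) ` S" by blast
  qed
  have finS: "finite S" unfolding S_def by (rule finite_subset[of _ "{..M+1}"]) auto
  have "finite P" using finite_subset[OF sub] finS by blast
  moreover have "card P \<le> M - b"
  proof -
    have "card P \<le> card ((\<lambda>n. (GG eps M n, GG eps M (n + b))) ` S)"
      by (rule card_mono[OF _ sub]) (use finS in simp)
    also have "\<dots> \<le> card S" by (rule card_image_le[OF finS])
    also have "\<dots> \<le> M - b" unfolding S_def
      by (rule card_S[OF r2 _ assms(6,7)]) (unfold r_def, rule NNle)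
    finally show ?thesis .
  qed
  ultimately show ?thesis unfolding P_def by blast
qed

end
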